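(* On a three-letter alphabet: (1) there exists a $1$-regular word of length $n\ge 1$ if and only if $n=3k$ for some integer $k\ge 2$; (2) there exists a $2$-regular word of length $n\ge 1$ if and only if $n=9k$ for some integer $k\ge 2$.
   Context: For a word $u=u_1\cdots u_m$ over an alphabet $\mathcal A$ with $b$ letters and an integer $r\ge -1$, $u$ is $r$-regular if for every $k=0,1,\dots,r$ the sum $\sum_{1\le t\le m,\ u_t=c} t^k$ is the same for all letters $c\in\mathcal A$ (a letter not occurring contributes $0$). Here $b=3$. *)

theory Defs
  imports Main
begin

definition pos_power_sum :: "'a list \<Rightarrow> 'a \<Rightarrow> nat \<Rightarrow> nat" where
  "pos_power_sum u c k = (\<Sum>t\<in>{1..length u}. if u ! (t - 1) = c then t ^ k else 0)"

definition regular :: "'a set \<Rightarrow> int \<Rightarrow> 'a list \<Rightarrow> bool" where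
  "regular A r u \<longleftrightarrow> set u \<subseteq> A \<and>
     (\<forall>k::nat. int k \<le> r \<longrightarrow> (\<forall>c\<in>A. \<forall>d\<in>A. pos_power_sum u c k = pos_power_sum u d k))"

end

theory Submission
  imports Defs
begin

fun ps :: "'a list \<Rightarrow> nat \<Rightarrow> 'a \<Rightarrow> nat \<Rightarrow> nat" where
  "ps [] s d k = 0"
| "ps (x#xs) s d k = (if x = d then (s+1)^k else 0) + ps xs (s+1) d k"

lemma ps_sum: "ps u s d k = (\<Sum>i<length u. if u!i = d then (i+1+s)^k else 0)"
proof (induction u arbitrary: s)
  case Nil thus ?case by simp
next
  case (Cons x xs)
  show ?case
    apply (simp add: Cons.IH sum.lessThan_Suc_shift del: sum.lessThan_Suc)
    apply (intro sum.cong refl)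
    apply simp
    done
qed

lemma pps_ps: "pos_power_sum u d k = ps u 0 d k"
proof -
  have "pos_power_sum u d k = (\<Sum>t\<in>Suc ` {..<length u}. if u ! (t - 1) = d then t ^ k else 0)"
    unfolding pos_power_sum_def image_Suc_lessThan ..
  also have "\<dots> = (\<Sum>i<length u. if u!i = d then (Suc i)^k else 0)"
    by (subst sum.reindex) auto
  also have "\<dots> = (\<Sum>i<length u. if u!i = d then (i+1+0)^k else 0)"
    by (intro sum.cong refl) simp
  finally show ?thesis by (simp only: ps_sum)
qed

lemma ps_append: "ps (u@v) s d k = ps u s d k + ps v (s + length u) d k"
  by (induction u arbitrary: s) auto

lemma ps0: "ps v s d 0 = ps v 0 d 0"
proof (induction v arbitrary: s)
  case Nil thus ?case by simp
next
  case (Cons x xs)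
  have "ps xs (s+1) d 0 = ps xs 1 d 0" using Cons.IH[of "s+1"] Cons.IH[of 1] by simp
  thus ?case by simp
qed

lemma ps1: "ps v s d 1 = ps v 0 d 1 + s * ps v 0 d 0"
proof (induction v arbitrary: s)
  case Nil thus ?case by simp
next
  case (Cons x xs)
  have a: "ps xs (Suc s) d 1 = ps xs 0 d 1 + Suc s * ps xs 0 d 0" by (rule Cons.IH)
  have b: "ps xs (Suc 0) d 1 = ps xs 0 d 1 + ps xs 0 d 0" using Cons.IH[of 1] by simp
  show ?case using a b ps0[of xs "Suc 0" d] by (simp add: algebra_simps)
qed

lemma ps2: "ps v s d 2 = ps v 0 d 2 + 2 * s * ps v 0 d 1 + s^2 * ps v 0 d 0"
proof (induction v arbitrary: s)
  case Nil thus ?case by simp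
next
  case (Cons x xs)
  have a: "ps xs (Suc s) d 2 = ps xs 0 d 2 + 2 * Suc s * ps xs 0 d 1 + (Suc s)^2 * ps xs 0 d 0"
    by (rule Cons.IH)
  have b: "ps xs (Suc 0) d 2 = ps xs 0 d 2 + 2 * ps xs 0 d 1 + ps xs 0 d 0" using Cons.IH[of 1] by simp
  have c: "ps xs (Suc 0) d 1 = ps xs 0 d 1 + ps xs 0 d 0" using ps1[of xs 1 d] by simp
  show ?case using a b c ps0[of xs "Suc 0" d] by (simp add: algebra_simps power2_eq_square)
qed

definition eqk :: "'a list \<Rightarrow> 'a \<Rightarrow> 'a \<Rightarrow> 'a \<Rightarrow> nat \<Rightarrow> bool" where
  "eqk v a b c k \<longleftrightarrow> ps v 0 a k = ps v 0 b k \<and> ps v 0 b k = ps v 0 c k"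

lemma app0: "eqk u a b c 0 \<Longrightarrow> eqk v a b c 0 \<Longrightarrow> eqk (u@v) a b c 0"
  unfolding eqk_def ps_append by (simp add: ps0[of v "length u"])

lemma app1: "eqk u a b c 1 \<Longrightarrow> eqk v a b c 0 \<Longrightarrow> eqk v a b c 1 \<Longrightarrow> eqk (u@v) a b c 1"
  unfolding eqk_def ps_append using ps1[of v "length u" a] ps1[of v "length u" b] ps1[of v "length u" c] by simp

lemma app2: "eqk u a b c 2 \<Longrightarrow> eqk v a b c 0 \<Longrightarrow> eqk v a b c 1 \<Longrightarrow> eqk v a b c 2
   \<Longrightarrow> eqk (u@v) a b c 2"
  unfolding eqk_def ps_append using ps2[of v "length u" a] ps2[of v "length u" b] ps2[of v "length u" c] by simp


lemma ps_z: "ps (x#xs) 0 d k = (if x=d then 1 else 0) + ps xs 1 d k" by simp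
lemma ps_o: "ps (x#xs) 1 d k = (if x=d then 2^k else 0) + ps xs 2 d k"
  by (subst ps.simps) (simp only: one_add_one)
lemma ps_n: "ps (x#xs) (numeral m) d k = (if x=d then (numeral m + 1)^k else 0) + ps xs (numeral m + 1) d k"
  by simp

lemma w6_0:
  assumes d: "a \<noteq> b" "a \<noteq> c" "b \<noteq> c"
  shows "eqk [a,b,c,c,b,a] a b c 0"
  using d
  apply (simp only: eqk_def ps_z ps_o ps_n ps.simps(1) numeral_plus_one add_num_simps
     d not_sym[OF d(1)] not_sym[OF d(2)] not_sym[OF d(3)] simp_thms if_True if_False)
  apply simp
  done

lemma w6_1:
  assumes d: "a \<noteq> b" "a \<noteq> c" "b \<noteq> c"
  shows "eqk [a,b,c,c,b,a] a b c 1"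
  using d
  apply (simp only: eqk_def ps_z ps_o ps_n ps.simps(1) numeral_plus_one add_num_simps
     d not_sym[OF d(1)] not_sym[OF d(2)] not_sym[OF d(3)] simp_thms if_True if_False)
  apply simp
  done

lemma w9_0:
  assumes d: "a \<noteq> b" "a \<noteq> c" "b \<noteq> c"
  shows "eqk [a,b,c,c,a,b,b,c,a] a b c 0"
  using d
  apply (simp only: eqk_def ps_z ps_o ps_n ps.simps(1) numeral_plus_one add_num_simps
     d not_sym[OF d(1)] not_sym[OF d(2)] not_sym[OF d(3)] simp_thms if_True if_False)
  apply simp
  done

lemma w9_1:
  assumes d: "a \<noteq> b" "a \<noteq> c" "b \<noteq> c"
  shows "eqk [a,b,c,c,a,b,b,c,a] a b c 1"
  using d
  apply (simp only: eqk_def ps_z ps_o ps_n ps.simps(1) numeral_plus_one add_num_simps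
     d not_sym[OF d(1)] not_sym[OF d(2)] not_sym[OF d(3)] simp_thms if_True if_False)
  apply simp
  done

lemma w18_0:
  assumes d: "a \<noteq> b" "a \<noteq> c" "b \<noteq> c"
  shows "eqk [c,a,b,c,a,b,b,b,a,a,c,c,a,c,c,b,b,a] a b c 0"
  using d
  apply (simp only: eqk_def ps_z ps_o ps_n ps.simps(1) numeral_plus_one add_num_simps
     d not_sym[OF d(1)] not_sym[OF d(2)] not_sym[OF d(3)] simp_thms if_True if_False)
  apply simp
  done

lemma w18_1:
  assumes d: "a \<noteq> b" "a \<noteq> c" "b \<noteq> c"
  shows "eqk [c,a,b,c,a,b,b,b,a,a,c,c,a,c,c,b,b,a] a b c 1"
  using d
  apply (simp only: eqk_def ps_z ps_o ps_n ps.simps(1) numeral_plus_one add_num_simps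
     d not_sym[OF d(1)] not_sym[OF d(2)] not_sym[OF d(3)] simp_thms if_True if_False)
  apply simp
  done

lemma w18_2:
  assumes d: "a \<noteq> b" "a \<noteq> c" "b \<noteq> c"
  shows "eqk [c,a,b,c,a,b,b,b,a,a,c,c,a,c,c,b,b,a] a b c 2"
  using d
  apply (simp only: eqk_def ps_z ps_o ps_n ps.simps(1) numeral_plus_one add_num_simps
     d not_sym[OF d(1)] not_sym[OF d(2)] not_sym[OF d(3)] simp_thms if_True if_False)
  apply simp
  done

lemma w27_0:
  assumes d: "a \<noteq> b" "a \<noteq> c" "b \<noteq> c"
  shows "eqk [c,c,b,a,b,a,b,a,c,a,b,a,c,b,b,a,a,c,c,c,c,b,c,b,b,a,a] a b c 0"
  using d
  apply (simp only: eqk_def ps_z ps_o ps_n ps.simps(1) numeral_plus_one add_num_simps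
     d not_sym[OF d(1)] not_sym[OF d(2)] not_sym[OF d(3)] simp_thms if_True if_False)
  apply simp
  done

lemma w27_1:
  assumes d: "a \<noteq> b" "a \<noteq> c" "b \<noteq> c"
  shows "eqk [c,c,b,a,b,a,b,a,c,a,b,a,c,b,b,a,a,c,c,c,c,b,c,b,b,a,a] a b c 1"
  using d
  apply (simp only: eqk_def ps_z ps_o ps_n ps.simps(1) numeral_plus_one add_num_simps
     d not_sym[OF d(1)] not_sym[OF d(2)] not_sym[OF d(3)] simp_thms if_True if_False)
  apply simp
  done

lemma w27_2:
  assumes d: "a \<noteq> b" "a \<noteq> c" "b \<noteq> c"
  shows "eqk [c,c,b,a,b,a,b,a,c,a,b,a,c,b,b,a,a,c,c,c,c,b,c,b,b,a,a] a b c 2"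
  using d
  apply (simp only: eqk_def ps_z ps_o ps_n ps.simps(1) numeral_plus_one add_num_simps
     d not_sym[OF d(1)] not_sym[OF d(2)] not_sym[OF d(3)] simp_thms if_True if_False)
  apply simp
  done


lemma ex1:
  assumes d: "a \<noteq> b" "a \<noteq> c" "b \<noteq> c"
  shows "m \<ge> 2 \<Longrightarrow> \<exists>v. length v = 3*m \<and> set v \<subseteq> {a,b,c} \<and> eqk v a b c 0 \<and> eqk v a b c 1"
proof (induction m rule: less_induct)
  case (less m)
  define w6 where "w6 = [a,b,c,c,b,a]"
  have w6: "length w6 = 6 \<and> set w6 \<subseteq> {a,b,c} \<and> eqk w6 a b c 0 \<and> eqk w6 a b c 1"
    unfolding w6_def using w6_0[OF d] w6_1[OF d] by auto
  show ?case
  proof (cases "m = 2 \<or> m = 3")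
    case True
    thus ?thesis
    proof
      assume "m = 2" thus ?thesis using w6 by auto
    next
      assume m: "m = 3"
      show ?thesis
        by (rule exI[of _ "[a,b,c,c,a,b,b,c,a]"]) (use m w9_0[OF d] w9_1[OF d] in auto)
    qed
  next
    case False
    have mm: "m - 2 < m" "2 \<le> m - 2" using less.prems False by auto
    obtain v where v: "length v = 3*(m-2)" "set v \<subseteq> {a,b,c}" "eqk v a b c 0" "eqk v a b c 1"
      using less.IH[OF mm] by blast
    show ?thesis
      by (rule exI[of _ "v @ w6"]) (use v w6 False less.prems app0 app1 in auto)
  qed
qed

lemma ex2:
  assumes d: "a \<noteq> b" "a \<noteq> c" "b \<noteq> c"
  shows "m \<ge> 2 \<Longrightarrow> \<exists>v. length v = 9*m \<and> set v \<subseteq> {a,b,c} \<and> eqk v a b c 0 \<and> eqk v a b c 1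
     \<and> eqk v a b c 2"
proof (induction m rule: less_induct)
  case (less m)
  define w where "w = [c,a,b,c,a,b,b,b,a,a,c,c,a,c,c,b,b,a]"
  have w: "length w = 18 \<and> set w \<subseteq> {a,b,c} \<and> eqk w a b c 0 \<and> eqk w a b c 1 \<and> eqk w a b c 2"
    unfolding w_def using w18_0[OF d] w18_1[OF d] w18_2[OF d] by auto
  show ?case
  proof (cases "m = 2 \<or> m = 3")
    case True
    thus ?thesis
    proof
      assume "m = 2" thus ?thesis using w by auto
    next
      assume m: "m = 3"
      show ?thesis
        by (rule exI[of _ "[c,c,b,a,b,a,b,a,c,a,b,a,c,b,b,a,a,c,c,c,c,b,c,b,b,a,a]"])
           (use m w27_0[OF d] w27_1[OF d] w27_2[OF d] in auto)
    qed
  next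
    case False
    have mm: "m - 2 < m" "2 \<le> m - 2" using less.prems False by auto
    obtain v where v: "length v = 9*(m-2)" "set v \<subseteq> {a,b,c}" "eqk v a b c 0"
      "eqk v a b c 1" "eqk v a b c 2"
      using less.IH[OF mm] by blast
    show ?thesis
      by (rule exI[of _ "v @ w"]) (use v w False less.prems app0 app1 app2 in auto)
  qed
qed

lemma reg_of: "set v \<subseteq> {a,b,c} \<Longrightarrow> (\<forall>k. int k \<le> r \<longrightarrow> eqk v a b c k) \<Longrightarrow> regular {a,b,c} r v"
  unfolding regular_def eqk_def pps_ps by auto

lemma total:
  assumes "set u \<subseteq> A" "finite A"
  shows "(\<Sum>d\<in>A. pos_power_sum u d k) = (\<Sum>t\<in>{1..length u}. t^k)"
  unfolding pos_power_sum_def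
proof (subst sum.swap, rule sum.cong[OF refl])
  fix t assume t: "t \<in> {1..length u}"
  hence "u!(t-1) \<in> A" using assms(1) nth_mem[of "t-1" u] by auto
  thus "(\<Sum>d\<in>A. if u ! (t - 1) = d then t ^ k else 0) = t ^ k"
    using assms(2) by (simp add: sum.delta)
qed

lemma three:
  assumes "card A = 3" "regular A r u" "int k \<le> r" "d \<in> A"
  shows "3 * pos_power_sum u d k = (\<Sum>t\<in>{1..length u}. t^k)"
proof -
  have fin: "finite A" using assms(1) by (intro card_ge_0_finite) simp
  have "(\<Sum>t\<in>{1..length u}. t^k) = (\<Sum>c\<in>A. pos_power_sum u c k)"
    using total[of u A k] assms(2) fin unfolding regular_def by simp
  also have "\<dots> = (\<Sum>c\<in>A. pos_power_sum u d k)"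
  proof (intro sum.cong refl)
    fix c assume "c \<in> A"
    thus "pos_power_sum u c k = pos_power_sum u d k"
      using assms(2,3,4) unfolding regular_def by blast
  qed
  also have "\<dots> = 3 * pos_power_sum u d k" using assms(1) by simp
  finally show ?thesis by simp
qed

lemma g1: "2 * (\<Sum>t\<in>{1..n}. t^1) = n*(n+1::nat)"
  by (induction n) (simp_all add: atLeastAtMostSuc_conv)

lemma g2: "6 * (\<Sum>t\<in>{1..n}. t^2) = n*(n+1)*(2*n+1::nat)"
  by (induction n) (simp_all add: atLeastAtMostSuc_conv algebra_simps power2_eq_square)

lemma g0: "(\<Sum>t\<in>{1..n}. t^0) = (n::nat)" by simp

lemma posS: "pos_power_sum u d k = (\<Sum>t\<in>{t\<in>{1..length u}. u!(t-1)=d}. t^k)"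
  unfolding pos_power_sum_def by (rule sum.inter_filter[symmetric]) simp

lemma no9: "p \<in> {1..9} \<Longrightarrow> q \<in> {1..9} \<Longrightarrow> r \<in> {1..9} \<Longrightarrow> p+q+r = 15 \<Longrightarrow>
   p^2+q^2+r^2 = (95::nat) \<Longrightarrow> False"
proof -
  assume h: "p \<in> {1..9}" "q \<in> {1..9}" "r \<in> {1..9}" "p+q+r = 15" "p^2+q^2+r^2 = (95::nat)"
  hence r: "r = 15 - p - q" by simp
  have p: "p=1 \<or> p=2 \<or> p=3 \<or> p=4 \<or> p=5 \<or> p=6 \<or> p=7 \<or> p=8 \<or> p=9" using h(1) by auto
  have q: "q=1 \<or> q=2 \<or> q=3 \<or> q=4 \<or> q=5 \<or> q=6 \<or> q=7 \<or> q=8 \<or> q=9" using h(2) by auto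
  show False using h(5) unfolding r using p q
    by (elim disjE) (simp_all add: power2_eq_square)
qed

lemma int_le1: "int k \<le> 1 \<Longrightarrow> k = 0 \<or> k = 1" by arith
lemma int_le2: "int k \<le> 2 \<Longrightarrow> k = 0 \<or> k = 1 \<or> k = 2" by arith

lemma necS:
  assumes "card A = 3" "regular A r u" "length u = n" "n \<ge> 1" "int k \<le> r"
  shows "3 * (\<Sum>t\<in>{t\<in>{1..n}. u!(t-1) = u!0}. t^k) = (\<Sum>t\<in>{1..n}. t^k)"
proof -
  have "u!0 \<in> set u" using assms(3,4) by (intro nth_mem) simp
  hence d: "u!0 \<in> A" using assms(2) unfolding regular_def by auto
  show ?thesis using three[OF assms(1,2,5) d] posS[of u "u!0" k] assms(3) by simp
qed

lemma oneS: "n \<ge> 1 \<Longrightarrow> 1 \<in> {t\<in>{1..n}. u!(t-1) = u!0}" by simp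

theorem mainTheorem12:
  fixes A :: "'a set" and n :: nat
  assumes "card A = 3" and "n \<ge> 1"
  shows "((\<exists>u. length u = n \<and> regular A 1 u) \<longleftrightarrow> (\<exists>k::nat. k \<ge> 2 \<and> n = 3 * k))
       \<and> ((\<exists>u. length u = n \<and> regular A 2 u) \<longleftrightarrow> (\<exists>k::nat. k \<ge> 2 \<and> n = 9 * k))"
proof -
  obtain a b c where A: "A = {a,b,c}" and d: "a \<noteq> b" "a \<noteq> c" "b \<noteq> c"
    using assms(1) card_3_iff[of A] by blast
  have P1: "(\<exists>u. length u = n \<and> regular A 1 u) \<longleftrightarrow> (\<exists>k::nat. k \<ge> 2 \<and> n = 3 * k)"
  proof
    assume "\<exists>u. length u = n \<and> regular A 1 u"
    then obtain u where u: "length u = n" "regular A 1 u" by blast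
    define S where "S = {t\<in>{1..n}. u!(t-1) = u!0}"
    have fS: "finite S" unfolding S_def by simp
    have e0: "3 * card S = n" using necS[OF assms(1) u(2) u(1) assms(2), of 0] unfolding S_def by simp
    have e1: "3 * (\<Sum>t\<in>S. t) = (\<Sum>t\<in>{1..n}. t)"
      using necS[OF assms(1) u(2) u(1) assms(2), of 1] unfolding S_def by simp
    have one: "1 \<in> S" unfolding S_def by (rule oneS[OF assms(2)])
    have "card S \<noteq> 1"
    proof
      assume c1: "card S = 1"
      then obtain x where Sx0: "S = {x}" by (auto simp: card_1_singleton_iff)
      have x1: "x = 1" using one Sx0 by blast
      have s1: "(\<Sum>t\<in>S. t) = 1" using Sx0 x1 by simp
      have n3: "n = 3" using e0 c1 by linarith
      have "2 * (\<Sum>t\<in>{1..n}. t) = 12" using g1[of 3] n3 by simp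
      thus False using e1 s1 by linarith
    qed
    moreover have "card S \<noteq> 0" using one fS by auto
    ultimately show "\<exists>k::nat. k \<ge> 2 \<and> n = 3 * k" using e0 by (intro exI[of _ "card S"]) auto
  next
    assume "\<exists>k::nat. k \<ge> 2 \<and> n = 3 * k"
    then obtain k where k: "k \<ge> 2" "n = 3*k" by blast
    obtain v where v: "length v = 3*k" "set v \<subseteq> {a,b,c}" "eqk v a b c 0" "eqk v a b c 1"
      using ex1[OF d k(1)] by blast
    have "regular {a,b,c} 1 v" using v int_le1 by (intro reg_of) auto
    thus "\<exists>u. length u = n \<and> regular A 1 u" using v k A by auto
  qed
  have P2: "(\<exists>u. length u = n \<and> regular A 2 u) \<longleftrightarrow> (\<exists>k::nat. k \<ge> 2 \<and> n = 9 * k)"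
  proof
    assume "\<exists>u. length u = n \<and> regular A 2 u"
    then obtain u where u: "length u = n" "regular A 2 u" by blast
    define S where "S = {t\<in>{1..n}. u!(t-1) = u!0}"
    have fS: "finite S" unfolding S_def by simp
    have SS: "S \<subseteq> {1..n}" unfolding S_def by auto
    have e0: "3 * card S = n" using necS[OF assms(1) u(2) u(1) assms(2), of 0] unfolding S_def by simp
    have e1: "3 * (\<Sum>t\<in>S. t) = (\<Sum>t\<in>{1..n}. t)"
      using necS[OF assms(1) u(2) u(1) assms(2), of 1] unfolding S_def by simp
    have e2: "3 * (\<Sum>t\<in>S. t^2) = (\<Sum>t\<in>{1..n}. t^2)"
      using necS[OF assms(1) u(2) u(1) assms(2), of 2] unfolding S_def by simp
    define m where "m = card S"
    have "6 * (3 * (\<Sum>t\<in>S. t^2)) = 3*m*(3*m+1)*(2*(3*m)+1)"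
      using e2 g2[of n] e0 unfolding m_def by simp
    hence "6 * (\<Sum>t\<in>S. t^2) = m + 3 * (6*m*m*m + 3*m*m)"
      by (simp add: algebra_simps)
    hence "3 dvd m" by presburger
    then obtain j where j: "m = 3*j" by blast
    have "j \<noteq> 0" using j e0 assms(2) unfolding m_def by auto
    moreover have "j \<noteq> 1"
    proof
      assume "j = 1"
      hence c3: "card S = 3" "n = 9" using j e0 unfolding m_def by auto
      then obtain p q r where pqr: "S = {p,q,r}" "p \<noteq> q" "q \<noteq> r" "p \<noteq> r"
        using card_3_iff[of S] by blast
      have s1: "2 * (\<Sum>t\<in>{1..n}. t) = 90" using g1[of 9] c3 by simp
      have s2: "6 * (\<Sum>t\<in>{1..n}. t^2) = 1710" using g2[of 9] c3 by simp
      have "p + q + r = 15" using e1 s1 pqr by simp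
      moreover have "p^2 + q^2 + r^2 = 95" using e2 s2 pqr by simp
      moreover have "p \<in> {1..9}" "q \<in> {1..9}" "r \<in> {1..9}" using SS pqr c3 by auto
      ultimately show False using no9 by blast
    qed
    ultimately show "\<exists>k::nat. k \<ge> 2 \<and> n = 9 * k" using e0 j unfolding m_def
      by (intro exI[of _ j]) auto
  next
    assume "\<exists>k::nat. k \<ge> 2 \<and> n = 9 * k"
    then obtain k where k: "k \<ge> 2" "n = 9*k" by blast
    obtain v where v: "length v = 9*k" "set v \<subseteq> {a,b,c}" "eqk v a b c 0" "eqk v a b c 1"
      "eqk v a b c 2"
      using ex2[OF d k(1)] by blast
    have "regular {a,b,c} 2 v" using v int_le2 by (intro reg_of) auto
    thus "\<exists>u. length u = n \<and> regular A 2 u" using v k A by auto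
  qed
  show ?thesis using P1 P2 by blast
qed

end
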